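(* Let $X$ be a random variable taking values in a set $\mathcal{X}$, $Y \in [0,1]$ a target outcome and $\hat{Y} \in [0,1]$ an expert prediction, all jointly distributed. Let $\mathcal{F}^{\text{binary}}$ be a class of functions $\mathcal{X} \to \{0,1\}$, let $\alpha \ge 0$, and let $S_1, \dots, S_K$ be an $\alpha$-multicalibrated partition with respect to $\mathcal{F}^{\text{binary}}$ and $Y$. Suppose that for every $k \in [K]$ there exists $\tilde{f}_k \in \mathcal{F}^{\text{binary}}$ such that $Y$ and $\hat{Y}$ are conditionally independent given $\tilde{f}_k(X)$ and the event $X \in S_k$. Then for all $k \in [K]$, $$\left|\mathrm{Cov}_k(Y, \hat{Y})\right| \le \sqrt{\frac{\alpha}{2}}.$$
   Context: $\mathrm{Cov}_k$ denotes covariance conditional on $\{X \in S_k\}$ (assumed to have positive probability). A set $S \subseteq \mathcal{X}$ is $\alpha$-indistinguishable with respect to a function class $\mathcal{F}$ and target $Y$ if $|\mathrm{Cov}(f(X), Y \mid X \in S)| \le \alpha$ for all $f \in \mathcal{F}$. Sets $S_1, \dots, S_K$ form an $\alpha$-multicalibrated partition with respect to $\mathcal{F}$ and $Y$ if they partition $\mathcal{X}$ and each $S_k$ is $\alpha$-indistinguishable with respect to $\mathcal{F}$ and $Y$. *)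

theory Defs
  imports "HOL-Probability.Probability"
begin

definition cond_expect_ev :: "'a measure \<Rightarrow> 'a set \<Rightarrow> ('a \<Rightarrow> real) \<Rightarrow> real" where
  "cond_expect_ev M E Z = (\<integral>\<omega>. indicator E \<omega> * Z \<omega> \<partial>M) / measure M E"

definition cond_cov :: "'a measure \<Rightarrow> 'a set \<Rightarrow> ('a \<Rightarrow> real) \<Rightarrow> ('a \<Rightarrow> real) \<Rightarrow> real" where
  "cond_cov M E A B =
     cond_expect_ev M E (\<lambda>\<omega>. A \<omega> * B \<omega>) - cond_expect_ev M E A * cond_expect_ev M E B"

definition ev_in :: "'a measure \<Rightarrow> ('a \<Rightarrow> 'x) \<Rightarrow> 'x set \<Rightarrow> 'a set" where
  "ev_in M X S = {\<omega> \<in> space M. X \<omega> \<in> S}"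

definition indist :: "'a measure \<Rightarrow> ('a \<Rightarrow> 'x) \<Rightarrow> ('a \<Rightarrow> real) \<Rightarrow> ('x \<Rightarrow> real) set \<Rightarrow> real \<Rightarrow> 'x set \<Rightarrow> bool" where
  "indist M X Y F \<alpha> S \<longleftrightarrow> (\<forall>f\<in>F. \<bar>cond_cov M (ev_in M X S) (\<lambda>\<omega>. f (X \<omega>)) Y\<bar> \<le> \<alpha>)"

definition multical_partition ::
  "'a measure \<Rightarrow> 'x measure \<Rightarrow> ('a \<Rightarrow> 'x) \<Rightarrow> ('a \<Rightarrow> real) \<Rightarrow> ('x \<Rightarrow> real) set \<Rightarrow> real
     \<Rightarrow> nat \<Rightarrow> (nat \<Rightarrow> 'x set) \<Rightarrow> bool" where
  "multical_partition M N X Y F \<alpha> K S \<longleftrightarrow>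
     (\<forall>k\<in>{1..K}. S k \<in> sets N) \<and>
     (\<Union>k\<in>{1..K}. S k) = space N \<and>
     (\<forall>j\<in>{1..K}. \<forall>k\<in>{1..K}. j \<noteq> k \<longrightarrow> S j \<inter> S k = {}) \<and>
     (\<forall>k\<in>{1..K}. indist M X Y F \<alpha> (S k))"

definition cond_indep_given ::
  "'a measure \<Rightarrow> ('a \<Rightarrow> real) \<Rightarrow> ('a \<Rightarrow> real) \<Rightarrow> ('a \<Rightarrow> real) \<Rightarrow> 'a set \<Rightarrow> bool" where
  "cond_indep_given M A B G E \<longleftrightarrow>
     (\<forall>g U V. U \<in> sets borel \<longrightarrow> V \<in> sets borel \<longrightarrow>
        (let C = {\<omega> \<in> space M. G \<omega> = g} \<inter> E in
          measure M ({\<omega>\<in>space M. A \<omega> \<in> U \<and> B \<omega> \<in> V} \<inter> C) * measure M C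
          = measure M ({\<omega>\<in>space M. A \<omega> \<in> U} \<inter> C) * measure M ({\<omega>\<in>space M. B \<omega> \<in> V} \<inter> C)))"

end

theory Submission
  imports Defs
begin

lemma alg_main:
  fixes p0 p1 a0 a1 b0 b1 \<alpha> :: real
  assumes p0: "p0 > 0" and p1: "p1 > 0"
    and a0: "0 \<le> a0" "a0 \<le> p0" and a1: "0 \<le> a1" "a1 \<le> p1"
    and b0: "0 \<le> b0" "b0 \<le> p0" and b1: "0 \<le> b1" "b1 \<le> p1"
    and h: "\<bar>a1 / (p0+p1) - p1 / (p0+p1) * ((a0 + a1) / (p0+p1))\<bar> \<le> \<alpha>"
  shows "\<bar>(a0*b0/p0 + a1*b1/p1) / (p0+p1) - ((a0+a1)/(p0+p1)) * ((b0+b1)/(p0+p1))\<bar> \<le> sqrt (\<alpha>/2)"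
proof -
  define p where "p = p0 + p1"
  define D where "D = a1*p0 - a0*p1"
  define D' where "D' = b1*p0 - b0*p1"
  have pp: "p > 0" using p0 p1 p_def by simp
  have cov: "(a0*b0/p0 + a1*b1/p1) / (p0+p1) - ((a0+a1)/(p0+p1)) * ((b0+b1)/(p0+p1)) = D*D'/(p0*p1*p^2)"
  proof -
    have pn: "p \<noteq> 0" using pp by simp
    have e1: "((a0*b0/p0 + a1*b1/p1) / p - ((a0+a1)/p) * ((b0+b1)/p)) * (p0*p1*p^2)
        = p*(a0*b0*p1 + a1*b1*p0) - p0*p1*(a0+a1)*(b0+b1)"
      using pn p0 p1 by (simp add: field_simps power2_eq_square)
    have e2: "p*(a0*b0*p1 + a1*b1*p0) - p0*p1*(a0+a1)*(b0+b1) = D*D'"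
      unfolding p_def D_def D'_def by algebra
    have "p0*p1*p^2 \<noteq> 0" using pn p0 p1 by simp
    then show ?thesis using e1 e2 unfolding p_def[symmetric] by (simp add: eq_divide_eq)
  qed
  have cby: "a1 / (p0+p1) - p1 / (p0+p1) * ((a0 + a1) / (p0+p1)) = D / p^2"
  proof -
    have pn: "p \<noteq> 0" using pp by simp
    have e1: "(a1 / p - p1 / p * ((a0 + a1) / p)) * p^2 = a1*p - p1*(a0+a1)"
      using pn by (simp add: field_simps power2_eq_square)
    have e2: "a1*p - p1*(a0+a1) = D" unfolding p_def D_def by algebra
    show ?thesis using e1 e2 pn unfolding p_def[symmetric] by (simp add: eq_divide_eq)
  qed
  have hD: "\<bar>D\<bar> / p^2 \<le> \<alpha>" using h cby pp by simp
  have D1: "\<bar>D\<bar> \<le> p0*p1"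
  proof -
    have "a1*p0 \<le> p1*p0" "a0*p1 \<le> p0*p1" "0 \<le> a1*p0" "0 \<le> a0*p1"
      using a0 a1 p0 p1 by (auto intro: mult_right_mono)
    then show ?thesis unfolding D_def by (simp add: abs_le_iff mult.commute)
  qed
  have D2: "\<bar>D'\<bar> \<le> p0*p1"
  proof -
    have "b1*p0 \<le> p1*p0" "b0*p1 \<le> p0*p1" "0 \<le> b1*p0" "0 \<le> b0*p1"
      using b0 b1 p0 p1 by (auto intro: mult_right_mono)
    then show ?thesis unfolding D'_def by (simp add: abs_le_iff mult.commute)
  qed
  have al: "0 \<le> \<alpha>" using hD abs_ge_zero[of D] pp by (metis divide_nonneg_nonneg order_trans zero_le_power2)
  have "(D*D'/(p0*p1*p^2))^2 = (\<bar>D\<bar>/p^2)^2 * (\<bar>D'\<bar>/(p0*p1))^2"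
    by (simp add: power_mult_distrib power_divide field_simps)
  also have "\<dots> \<le> (\<bar>D\<bar>/p^2)^2 * 1"
    using D2 p0 p1 by (intro mult_left_mono) (auto simp: power_le_one)
  also have "\<dots> = (\<bar>D\<bar>/p^2) * (\<bar>D\<bar>/p^2)" by (simp add: power2_eq_square)
  also have "\<dots> \<le> \<alpha> * (p0*p1/p^2)"
    using hD D1 pp al by (intro mult_mono) (auto intro: divide_right_mono)
  also have "\<dots> \<le> \<alpha> * (1/4)"
  proof (rule mult_left_mono)
    have "0 \<le> (p0-p1)^2" by simp
    then have "4*(p0*p1) \<le> p^2" unfolding p_def by (simp add: power2_eq_square algebra_simps)
    then show "p0*p1/p^2 \<le> 1/4" using pp by (simp add: field_simps)
    show "0 \<le> \<alpha>" by (rule al)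
  qed
  also have "\<dots> \<le> \<alpha>/2" using al by simp
  finally have "(D*D'/(p0*p1*p^2))^2 \<le> \<alpha>/2" .
  then have "\<bar>D*D'/(p0*p1*p^2)\<bar> \<le> sqrt (\<alpha>/2)" by (metis real_sqrt_abs real_sqrt_le_mono)
  then show ?thesis using cov by simp
qed

lemma alg_full:
  fixes p0 p1 a0 a1 b0 b1 c0 c1 \<alpha> :: real
  assumes p: "0 \<le> p0" "0 \<le> p1" "p0 + p1 > 0"
    and a0: "0 \<le> a0" "a0 \<le> p0" and a1: "0 \<le> a1" "a1 \<le> p1"
    and b0: "0 \<le> b0" "b0 \<le> p0" and b1: "0 \<le> b1" "b1 \<le> p1"
    and c0: "0 \<le> c0" "c0 \<le> p0" and c1: "0 \<le> c1" "c1 \<le> p1"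
    and e0: "c0 * p0 = a0 * b0" and e1: "c1 * p1 = a1 * b1"
    and al: "0 \<le> \<alpha>"
    and h: "\<bar>a1 / (p0+p1) - p1 / (p0+p1) * ((a0 + a1) / (p0+p1))\<bar> \<le> \<alpha>"
  shows "\<bar>(c0 + c1) / (p0+p1) - ((a0+a1)/(p0+p1)) * ((b0+b1)/(p0+p1))\<bar> \<le> sqrt (\<alpha>/2)"
proof (cases "p0 = 0")
  case True
  then have z: "a0 = 0" "b0 = 0" "c0 = 0" using a0 b0 c0 by auto
  have pp: "p1 > 0" using p True by simp
  have "c1 = a1*b1/p1" using e1 pp by (simp add: field_simps)
  then have "(c0 + c1) / (p0+p1) - ((a0+a1)/(p0+p1)) * ((b0+b1)/(p0+p1)) = 0"
    using z True pp by (simp add: field_simps power2_eq_square)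
  then show ?thesis using al by simp
next
  case False
  show ?thesis
  proof (cases "p1 = 0")
    case True
    then have z: "a1 = 0" "b1 = 0" "c1 = 0" using a1 b1 c1 by auto
    have pp: "p0 > 0" using p True by simp
    have "c0 = a0*b0/p0" using e0 pp by (simp add: field_simps)
    then have "(c0 + c1) / (p0+p1) - ((a0+a1)/(p0+p1)) * ((b0+b1)/(p0+p1)) = 0"
      using z True pp by (simp add: field_simps power2_eq_square)
    then show ?thesis using al by simp
  next
    case F2: False
    have pp: "p0 > 0" "p1 > 0" using p False F2 by auto
    have "c0 = a0*b0/p0" using e0 pp by (simp add: field_simps)
    moreover have "c1 = a1*b1/p1" using e1 pp by (simp add: field_simps)
    ultimately show ?thesis using alg_main[OF pp a0 a1 b0 b1 h] by simp
  qed
qed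

lemma ind_int_bounds:
  fixes Z :: "'a \<Rightarrow> real"
  assumes P: "prob_space M" and C: "C \<in> sets M" and Zm: "Z \<in> borel_measurable M"
    and Zb: "\<forall>\<omega>\<in>space M. Z \<omega> \<in> {0..1}"
  shows "0 \<le> (\<integral>\<omega>. indicator C \<omega> * Z \<omega> \<partial>M)" "(\<integral>\<omega>. indicator C \<omega> * Z \<omega> \<partial>M) \<le> measure M C"
proof -
  interpret prob_space M by (rule P)
  show "0 \<le> (\<integral>\<omega>. indicator C \<omega> * Z \<omega> \<partial>M)"
    using Zb by (intro Bochner_Integration.integral_nonneg) auto
  have "integrable M (indicator C :: 'a \<Rightarrow> real)"
    using C by (intro integrable_const_bound[where B=1]) auto
  then have "(\<integral>\<omega>. indicator C \<omega> * Z \<omega> \<partial>M) \<le> (\<integral>\<omega>. indicator C \<omega> \<partial>M)"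
    using Zb by (intro integral_mono') (auto split: split_indicator)
  also have "\<dots> = measure M C" using C sets.sets_into_space[OF C] by (simp add: Int_absorb2)
  finally show "(\<integral>\<omega>. indicator C \<omega> * Z \<omega> \<partial>M) \<le> measure M C" .
qed

lemma ind_integrable:
  fixes Z :: "'a \<Rightarrow> real"
  assumes P: "prob_space M" and C: "C \<in> sets M" and Zm: "Z \<in> borel_measurable M"
    and Zb: "\<forall>\<omega>\<in>space M. Z \<omega> \<in> {0..1}"
  shows "integrable M (\<lambda>\<omega>. indicator C \<omega> * Z \<omega>)"
proof -
  interpret prob_space M by (rule P)
  show ?thesis using C Zm Zb by (intro integrable_const_bound[where B=1]) (auto simp: indicator_def)
qed

lemma cond_prod:
  fixes Y Z :: "'a \<Rightarrow> real"
  assumes P: "prob_space M" and C: "C \<in> sets M" and pos: "measure M C > 0"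
    and Ym: "Y \<in> borel_measurable M" and Zm: "Z \<in> borel_measurable M"
    and Yb: "\<forall>\<omega>\<in>space M. Y \<omega> \<in> {0..1}" and Zb: "\<forall>\<omega>\<in>space M. Z \<omega> \<in> {0..1}"
    and ind: "\<And>U V. U \<in> sets borel \<Longrightarrow> V \<in> sets borel \<Longrightarrow>
       measure M ({\<omega>\<in>space M. Y \<omega> \<in> U \<and> Z \<omega> \<in> V} \<inter> C) * measure M C
       = measure M ({\<omega>\<in>space M. Y \<omega> \<in> U} \<inter> C) * measure M ({\<omega>\<in>space M. Z \<omega> \<in> V} \<inter> C)"
  shows "(\<integral>\<omega>. indicator C \<omega> * (Y \<omega> * Z \<omega>) \<partial>M) * measure M C
       = (\<integral>\<omega>. indicator C \<omega> * Y \<omega> \<partial>M) * (\<integral>\<omega>. indicator C \<omega> * Z \<omega> \<partial>M)"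
proof -
  interpret prob_space M by (rule P)
  define m where "m = measure M C"
  have mp: "m > 0" using pos m_def by simp
  have emC: "emeasure M C = ennreal m" using emeasure_eq_measure m_def by simp
  have em: "emeasure M C \<noteq> 0" "emeasure M C \<noteq> \<infinity>" using emC mp by auto
  define M' where "M' = uniform_measure M C"
  interpret P': prob_space M' unfolding M'_def by (rule prob_space_uniform_measure[OF em])
  have sM': "sets M' = sets M" "space M' = space M" unfolding M'_def by auto
  have Mdens: "M' = density M (\<lambda>x. ennreal (indicator C x / m))"
    unfolding M'_def uniform_measure_def
  proof (rule density_cong)
    show "(\<lambda>x. ennreal (indicator C x / m)) \<in> borel_measurable M" using C by measurable
    show "(\<lambda>x. indicator C x / emeasure M C) \<in> borel_measurable M" using C by measurable
    show "AE x in M. indicator C x / emeasure M C = ennreal (indicator C x / m)"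
      using mp by (auto simp: emC indicator_def divide_ennreal[symmetric])
  qed
  have int': "(\<integral>x. g x \<partial>M') = (\<integral>x. indicator C x * g x \<partial>M) / m"
    if g: "g \<in> borel_measurable M" for g :: "'a \<Rightarrow> real"
  proof -
    have "(\<integral>x. g x \<partial>M') = (\<integral>x. (indicator C x / m) *\<^sub>R g x \<partial>M)"
      unfolding Mdens using g C mp by (intro integral_density) auto
    also have "\<dots> = (\<integral>x. indicator C x * g x / m \<partial>M)" by simp
    also have "\<dots> = (\<integral>x. indicator C x * g x \<partial>M) / m" by (rule integral_divide_zero)
    finally show ?thesis .
  qed
  have meas': "P'.prob A = measure M (C \<inter> A) / m" if "A \<in> sets M" for A
    unfolding M'_def m_def using em that by simp
  have rvY: "Y \<in> measurable M' borel" by (subst measurable_cong_sets[OF sM'(1) refl]) (rule Ym)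
  have rvZ: "Z \<in> measurable M' borel" by (subst measurable_cong_sets[OF sM'(1) refl]) (rule Zm)
  have istab: "Int_stable {W -` A \<inter> space M' |A. A \<in> sets borel}" for W :: "'a \<Rightarrow> real"
    unfolding Int_stable_def
    apply (auto)
    apply (rule_tac x="A \<inter> Aa" in exI)
    apply auto
    done
  have iset: "P'.indep_set {Y -` A \<inter> space M' |A. A \<in> sets borel} {Z -` A \<inter> space M' |A. A \<in> sets borel}"
    unfolding P'.indep_sets2_eq
  proof (intro conjI ballI)
    show "{Y -` A \<inter> space M' |A. A \<in> sets borel} \<subseteq> P'.events"
      using Ym by (auto simp: sM' measurable_sets)
    show "{Z -` A \<inter> space M' |A. A \<in> sets borel} \<subseteq> P'.events"
      using Zm by (auto simp: sM' measurable_sets)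
    fix a b assume a: "a \<in> {Y -` A \<inter> space M' |A. A \<in> sets borel}"
      and b: "b \<in> {Z -` A \<inter> space M' |A. A \<in> sets borel}"
    then obtain U V where U: "U \<in> sets borel" "a = Y -` U \<inter> space M"
      and V: "V \<in> sets borel" "b = Z -` V \<inter> space M" by (auto simp: sM')
    have ea: "a = {\<omega>\<in>space M. Y \<omega> \<in> U}" and eb: "b = {\<omega>\<in>space M. Z \<omega> \<in> V}"
      and eab: "a \<inter> b = {\<omega>\<in>space M. Y \<omega> \<in> U \<and> Z \<omega> \<in> V}" using U V by auto
    have sa: "a \<in> sets M" using U Ym by (simp add: measurable_sets)
    have sb: "b \<in> sets M" using V Zm by (simp add: measurable_sets)
    have "P'.prob (a \<inter> b) = measure M (C \<inter> (a \<inter> b)) / m" using sa sb by (intro meas') auto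
    also have "\<dots> = measure M (a \<inter> C) * measure M (b \<inter> C) / m / m"
    proof -
      have q: "{\<omega>\<in>space M. Y \<omega> \<in> U} \<inter> {\<omega>\<in>space M. Z \<omega> \<in> V} = {\<omega>\<in>space M. Y \<omega> \<in> U \<and> Z \<omega> \<in> V}" by auto
      show ?thesis using ind[OF U(1) V(1)] mp unfolding ea eb m_def[symmetric] q
        by (simp add: field_simps Int_commute)
    qed
    also have "\<dots> = P'.prob a * P'.prob b" using meas'[OF sa] meas'[OF sb]
      by (simp add: Int_commute)
    finally show "P'.prob (a \<inter> b) = P'.prob a * P'.prob b" .
  qed
  have indep: "P'.indep_var borel Y borel Z"
    unfolding P'.indep_var_eq
    using rvY rvZ P'.indep_set_sigma_sets[OF iset istab istab] by simp
  have iY: "integrable M' Y"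
    using Yb rvY by (intro P'.integrable_const_bound[where B=1]) (auto simp: sM')
  have iZ: "integrable M' Z"
    using Zb rvZ by (intro P'.integrable_const_bound[where B=1]) (auto simp: sM')
  have "(\<integral>\<omega>. Y \<omega> * Z \<omega> \<partial>M') = (\<integral>\<omega>. Y \<omega> \<partial>M') * (\<integral>\<omega>. Z \<omega> \<partial>M')"
    by (rule P'.indep_var_lebesgue_integral[OF indep iY iZ])
  then have "(\<integral>\<omega>. indicator C \<omega> * (Y \<omega> * Z \<omega>) \<partial>M) / m
      = (\<integral>\<omega>. indicator C \<omega> * Y \<omega> \<partial>M) / m * ((\<integral>\<omega>. indicator C \<omega> * Z \<omega> \<partial>M) / m)"
    using int'[OF Ym] int'[OF Zm] int'[of "\<lambda>\<omega>. Y \<omega> * Z \<omega>"] Ym Zm by simp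
  then show ?thesis using mp unfolding m_def[symmetric] by (simp add: field_simps)
qed

theorem theorem2:
  fixes M :: "'a measure" and N :: "'x measure"
    and X :: "'a \<Rightarrow> 'x" and Y Yhat :: "'a \<Rightarrow> real"
    and F :: "('x \<Rightarrow> real) set" and \<alpha> :: real
    and K :: nat and S :: "nat \<Rightarrow> 'x set"
  assumes "prob_space M"
    and "X \<in> measurable M N"
    and "Y \<in> borel_measurable M" and "Yhat \<in> borel_measurable M"
    and "\<forall>\<omega>\<in>space M. Y \<omega> \<in> {0..1}"
    and "\<forall>\<omega>\<in>space M. Yhat \<omega> \<in> {0..1}"
    and "\<forall>f\<in>F. f \<in> borel_measurable N \<and> (\<forall>x. f x \<in> {0, 1})"
    and "\<alpha> \<ge> 0"
    and "multical_partition M N X Y F \<alpha> K S"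
    and "\<forall>k\<in>{1..K}. measure M (ev_in M X (S k)) > 0"
    and "\<forall>k\<in>{1..K}. \<exists>f\<in>F. cond_indep_given M Y Yhat (\<lambda>\<omega>. f (X \<omega>)) (ev_in M X (S k))"
  shows "\<forall>k\<in>{1..K}. \<bar>cond_cov M (ev_in M X (S k)) Y Yhat\<bar> \<le> sqrt (\<alpha> / 2)"
proof
  note P = assms(1) and Xm = assms(2) and Ym = assms(3) and Zm = assms(4)
    and Yb = assms(5) and Zb = assms(6)
  interpret prob_space M by (rule P)
  fix k assume k: "k \<in> {1..K}"
  define E where "E = ev_in M X (S k)"
  have Sk: "S k \<in> sets N" using assms(9) k unfolding multical_partition_def by auto
  have Es: "E \<in> sets M"
  proof -
    have "E = X -` S k \<inter> space M" unfolding E_def ev_in_def by auto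
    then show ?thesis using Xm Sk by (simp add: measurable_sets)
  qed
  have pE: "measure M E > 0" using assms(10) k E_def by simp
  obtain f where fF: "f \<in> F" and ci: "cond_indep_given M Y Yhat (\<lambda>\<omega>. f (X \<omega>)) E"
    using assms(11) k unfolding E_def by blast
  have fm: "f \<in> borel_measurable N" and f01: "\<And>x. f x \<in> {0,1}" using assms(7) fF by auto
  define B where "B = (\<lambda>\<omega>. f (X \<omega>))"
  have Bm: "B \<in> borel_measurable M" unfolding B_def using fm Xm by (rule measurable_compose[rotated])
  have B01: "\<And>\<omega>. B \<omega> = 0 \<or> B \<omega> = 1" unfolding B_def using f01 by auto
  have Bb: "\<forall>\<omega>\<in>space M. B \<omega> \<in> {0..1}" using B01 by (metis atLeastAtMost_iff order_refl zero_le_one)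
  define C where "C = (\<lambda>g. {\<omega>\<in>space M. B \<omega> = g} \<inter> E)"
  have Cs: "C g \<in> sets M" for g
  proof -
    have "{\<omega>\<in>space M. B \<omega> = g} \<in> sets M" using Bm by measurable
    then show ?thesis unfolding C_def using Es by auto
  qed
  have indC: "measure M ({\<omega>\<in>space M. Y \<omega> \<in> U \<and> Yhat \<omega> \<in> V} \<inter> C g) * measure M (C g)
       = measure M ({\<omega>\<in>space M. Y \<omega> \<in> U} \<inter> C g) * measure M ({\<omega>\<in>space M. Yhat \<omega> \<in> V} \<inter> C g)"
    if "U \<in> sets borel" "V \<in> sets borel" for U V g
    using ci that unfolding cond_indep_given_def C_def B_def Let_def by blast
  define I where "I = (\<lambda>A Z. (\<integral>\<omega>. indicator A \<omega> * Z \<omega> \<partial>M) :: real)"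
  have prodC: "I (C g) (\<lambda>\<omega>. Y \<omega> * Yhat \<omega>) * measure M (C g) = I (C g) Y * I (C g) Yhat" for g
  proof (cases "measure M (C g) > 0")
    case True
    show ?thesis unfolding I_def by (rule cond_prod[OF P Cs True Ym Zm Yb Zb indC])
  next
    case False
    then have "measure M (C g) = 0" using measure_nonneg[of M "C g"] by linarith
    moreover have "I (C g) Y = 0" using ind_int_bounds[OF P Cs[of g] Ym Yb] \<open>measure M (C g) = 0\<close>
      unfolding I_def by linarith
    ultimately show ?thesis by simp
  qed
  have YZm: "(\<lambda>\<omega>. Y \<omega> * Yhat \<omega>) \<in> borel_measurable M" using Ym Zm by measurable
  have YZb: "\<forall>\<omega>\<in>space M. Y \<omega> * Yhat \<omega> \<in> {0..1}" using Yb Zb by (auto intro: mult_le_one)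
  have Esp: "E \<subseteq> space M" using Es by (rule sets.sets_into_space)
  have split: "I E Z = I (C 0) Z + I (C 1) Z"
    if Zm': "Z \<in> borel_measurable M" and Zb': "\<forall>\<omega>\<in>space M. Z \<omega> \<in> {0..1}" for Z
  proof -
    have "I E Z = (\<integral>\<omega>. indicator (C 0) \<omega> * Z \<omega> + indicator (C 1) \<omega> * Z \<omega> \<partial>M)"
      unfolding I_def
    proof (rule Bochner_Integration.integral_cong[OF refl])
      fix \<omega> assume "\<omega> \<in> space M"
      then show "indicator E \<omega> * Z \<omega> = indicator (C 0) \<omega> * Z \<omega> + indicator (C 1) \<omega> * Z \<omega>"
        unfolding C_def using B01[of \<omega>] by (auto split: split_indicator)
    qed
    also have "\<dots> = I (C 0) Z + I (C 1) Z" unfolding I_def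
      by (rule Bochner_Integration.integral_add; rule ind_integrable[OF P Cs Zm' Zb'])
    finally show ?thesis .
  qed
  have Eun: "E = C 0 \<union> C 1" unfolding C_def using B01 Esp by auto
  have pEs: "measure M E = measure M (C 0) + measure M (C 1)"
    unfolding Eun by (rule finite_measure_Union[OF Cs Cs]) (auto simp: C_def)
  have covB: "\<bar>cond_cov M E B Y\<bar> \<le> \<alpha>"
    using assms(9) k fF unfolding multical_partition_def indist_def E_def B_def by auto
  have IBY: "(\<integral>\<omega>. indicator E \<omega> * (B \<omega> * Y \<omega>) \<partial>M) = I (C 1) Y"
    unfolding I_def
  proof (rule Bochner_Integration.integral_cong[OF refl])
    fix \<omega> assume "\<omega> \<in> space M"
    then show "indicator E \<omega> * (B \<omega> * Y \<omega>) = indicator (C 1) \<omega> * Y \<omega>"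
      unfolding C_def using B01[of \<omega>] by (auto split: split_indicator)
  qed
  have IB: "(\<integral>\<omega>. indicator E \<omega> * B \<omega> \<partial>M) = measure M (C 1)"
  proof -
    have "(\<integral>\<omega>. indicator E \<omega> * B \<omega> \<partial>M) = (\<integral>\<omega>. indicator (C 1) \<omega> \<partial>M)"
    proof (rule Bochner_Integration.integral_cong[OF refl])
      fix \<omega> assume "\<omega> \<in> space M"
      then show "indicator E \<omega> * B \<omega> = indicator (C 1) \<omega>"
        unfolding C_def using B01[of \<omega>] by (auto split: split_indicator)
    qed
    also have "\<dots> = measure M (C 1)" using sets.sets_into_space[OF Cs[of 1]] by (simp add: Int_absorb2)
    finally show ?thesis .
  qed
  have h: "\<bar>I (C 1) Y / (measure M (C 0) + measure M (C 1)) - measure M (C 1) / (measure M (C 0) + measure M (C 1))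
      * ((I (C 0) Y + I (C 1) Y) / (measure M (C 0) + measure M (C 1)))\<bar> \<le> \<alpha>"
    using covB unfolding cond_cov_def cond_expect_ev_def IBY IB
    using split[OF Ym Yb] pEs unfolding I_def by simp
  have goal: "\<bar>(I (C 0) (\<lambda>\<omega>. Y \<omega> * Yhat \<omega>) + I (C 1) (\<lambda>\<omega>. Y \<omega> * Yhat \<omega>)) / (measure M (C 0) + measure M (C 1))
     - ((I (C 0) Y + I (C 1) Y) / (measure M (C 0) + measure M (C 1)))
     * ((I (C 0) Yhat + I (C 1) Yhat) / (measure M (C 0) + measure M (C 1)))\<bar> \<le> sqrt (\<alpha>/2)"
    apply (rule alg_full)
    using pE pEs ind_int_bounds[OF P Cs Ym Yb] ind_int_bounds[OF P Cs Zm Zb]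
      ind_int_bounds[OF P Cs YZm YZb] prodC[of 0] prodC[of 1] assms(8) h
    by (auto simp: I_def mult.commute)
  show "\<bar>cond_cov M (ev_in M X (S k)) Y Yhat\<bar> \<le> sqrt (\<alpha> / 2)"
    using goal unfolding E_def[symmetric] cond_cov_def cond_expect_ev_def
    using split[OF Ym Yb] split[OF Zm Zb] split[OF YZm YZb] pEs unfolding I_def by simp
qed

end
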